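(* Let $P$ be a query problem (with inputs of a fixed size $n$), let $D(P)$ be its deterministic query complexity and, for each integer $k\ge 0$, let $D_k(P)$ be its $k$-change query complexity, as defined in the context. Then: (i) $D_k(P)\le D(P)$ for every $k\ge 0$; (ii) for every $k\ge 0$, $$D_k(P)\le \min\Big\{\sum_{i=1}^{l} D_{j_i}(P)\;:\; l\ge 1,\ j_1,\dots,j_l\ge 0 \text{ integers},\ \sum_{i=1}^{l}(j_i+1)>k\Big\}.$$
   Context: A query problem $P$ consists of a finite set $X$ of inputs, a function $f:X\to Y$, and a set of allowed queries; each query $q$ has an answer $q(x)$ for each input $x\in X$. The goal is to determine $f(x)$ for an unknown input $x$. The deterministic query complexity $D(P)$ is the minimum, over all adaptive querying strategies (decision trees), of the maximum over inputs of the number of queries asked before the answers received determine $f$ (i.e. all inputs consistent with all answers so far have the same $f$-value). The $k$-change complexity $D_k(P)$ is defined by the following game between a Questioner and an Adversary. The Adversary chooses an input $x\in X$ (the current input). The Questioner, who always knows the current input, asks queries one after another; each query is answered according to the current input. Between queries the Adversary may replace the current input by any other input consistent with all answers given so far, but he may do so at most $k$ times in total. The game ends as soon as the answers given determine the value of $f$. $D_k(P)$ is the number of queries asked when the Questioner plays to minimize and the Adversary plays to maximize the number of queries. (In particular $D_0(P)$ is the non-deterministic/certificate complexity.) *)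

theory Defs
  imports Main "HOL-Library.Extended_Nat"
begin

text \<open>The knowledge state of the Questioner is the set S
  of inputs consistent with all answers so far.\<close>

definition determined :: "('x \<Rightarrow> 'y) \<Rightarrow> 'x set \<Rightarrow> bool" where
  "determined f S \<longleftrightarrow> (\<forall>x\<in>S. \<forall>y\<in>S. f x = f y)"

definition restrict_ans :: "'x set \<Rightarrow> ('x \<Rightarrow> 'a) \<Rightarrow> 'x \<Rightarrow> 'x set" where
  "restrict_ans S q x = {y\<in>S. q y = q x}"

text \<open>dt_le Q f S d: some (adaptive) decision tree of depth at most d determines f
  on the consistent set S.\<close>
primrec dt_le :: "('x \<Rightarrow> 'a) set \<Rightarrow> ('x \<Rightarrow> 'y) \<Rightarrow> 'x set \<Rightarrow> nat \<Rightarrow> bool" where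
  "dt_le Q f S 0 = determined f S"
| "dt_le Q f S (Suc d) =
     (determined f S \<or> (\<exists>q\<in>Q. \<forall>x\<in>S. dt_le Q f (restrict_ans S q x) d))"

text \<open>Deterministic query complexity (infinity if no decision tree works).\<close>
definition qc_D :: "('x \<Rightarrow> 'a) set \<Rightarrow> ('x \<Rightarrow> 'y) \<Rightarrow> 'x set \<Rightarrow> enat" where
  "qc_D Q f X = (INF d\<in>{d. dt_le Q f X d}. enat d)"

text \<open>kwin Q f S x k d: in the k-change game, from a position where S is the set of inputs
  consistent with the answers so far, x is the current input and the Adversary has k changes
  left, the Questioner can force the game to end within d further queries.  After each answer
  the Adversary may keep x or (if k > 0) switch to another consistent input, using a change.\<close>
primrec kwin :: "('x \<Rightarrow> 'a) set \<Rightarrow> ('x \<Rightarrow> 'y) \<Rightarrow> 'x set \<Rightarrow> 'x \<Rightarrow> nat \<Rightarrow> nat \<Rightarrow> bool" where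
  "kwin Q f S x k 0 = determined f S"
| "kwin Q f S x k (Suc d) =
     (determined f S \<or>
      (\<exists>q\<in>Q. kwin Q f (restrict_ans S q x) x k d \<and>
         (0 < k \<longrightarrow> (\<forall>x'\<in>restrict_ans S q x. kwin Q f (restrict_ans S q x) x' (k - 1) d))))"

text \<open>k-change complexity: value of the game (infinity if the Adversary can prolong forever).
  The Adversary's initial choice is any x in X.\<close>
definition qc_Dk :: "('x \<Rightarrow> 'a) set \<Rightarrow> ('x \<Rightarrow> 'y) \<Rightarrow> 'x set \<Rightarrow> nat \<Rightarrow> enat" where
  "qc_Dk Q f X k = (INF d\<in>{d. \<forall>x\<in>X. kwin Q f X x k d}. enat d)"

end

theory Submission
  imports Defs
begin

lemma determined_empty: "determined f {}"
  by (simp add: determined_def)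

lemma determined_mono: "determined f S \<Longrightarrow> T \<subseteq> S \<Longrightarrow> determined f T"
  by (auto simp: determined_def)

lemma dt_le_empty: "dt_le Q f {} d"
  by (cases d) (simp_all add: determined_empty)

lemma kwin_det: "determined f S \<Longrightarrow> kwin Q f S x k d"
  by (cases d) simp_all

lemma kwinI:
  assumes "q \<in> Q" "kwin Q f (restrict_ans S q x) x k d"
    "0 < k \<longrightarrow> (\<forall>x'\<in>restrict_ans S q x. kwin Q f (restrict_ans S q x) x' (k - 1) d)"
  shows "kwin Q f S x k (Suc d)"
  using assms by (simp only: kwin.simps) blast

lemma kwinE:
  assumes "kwin Q f S x k (Suc d)" "\<not> determined f S"
  obtains q where "q \<in> Q" "kwin Q f (restrict_ans S q x) x k d"
    "0 < k \<longrightarrow> (\<forall>x'\<in>restrict_ans S q x. kwin Q f (restrict_ans S q x) x' (k - 1) d)"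
  using assms by (simp only: kwin.simps) blast

lemma dt_le_kwin: "dt_le Q f S d \<Longrightarrow> kwin Q f S x k d"
proof (induction d arbitrary: S x k)
  case 0
  then show ?case by simp
next
  case (Suc d)
  show ?case
  proof (cases "determined f S")
    case True
    then show ?thesis by simp
  next
    case False
    with Suc.prems obtain q where q: "q \<in> Q" "\<forall>y\<in>S. dt_le Q f (restrict_ans S q y) d"
      by auto
    have all: "dt_le Q f (restrict_ans S q z) d" for z
    proof (cases "\<exists>y\<in>S. q y = q z")
      case True
      then obtain y where "y \<in> S" "q y = q z" by blast
      then have "restrict_ans S q z = restrict_ans S q y" by (simp add: restrict_ans_def)
      with q \<open>y \<in> S\<close> show ?thesis by simp
    next
      case False
      then have "restrict_ans S q z = {}" by (auto simp: restrict_ans_def)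
      then show ?thesis by (simp add: dt_le_empty)
    qed
    have "kwin Q f (restrict_ans S q x) x k d" using all Suc.IH by blast
    moreover have "0 < k \<longrightarrow> (\<forall>x'\<in>restrict_ans S q x. kwin Q f (restrict_ans S q x) x' (k - 1) d)"
      using all Suc.IH by blast
    ultimately show ?thesis using q(1) by (intro kwinI)
  qed
qed

lemma kwin_mono_S: "kwin Q f S x k d \<Longrightarrow> T \<subseteq> S \<Longrightarrow> kwin Q f T x k d"
proof (induction d arbitrary: S T x k)
  case 0
  then show ?case using determined_mono by auto
next
  case (Suc d)
  show ?case
  proof (cases "determined f S")
    case True
    then show ?thesis using determined_mono Suc.prems by (simp add: determined_mono[of f S T])
  next
    case False
    with Suc.prems(1) obtain q where q: "q \<in> Q" "kwin Q f (restrict_ans S q x) x k d"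
      "0 < k \<longrightarrow> (\<forall>x'\<in>restrict_ans S q x. kwin Q f (restrict_ans S q x) x' (k - 1) d)"
      by auto
    have sub: "restrict_ans T q x \<subseteq> restrict_ans S q x"
      using Suc.prems(2) by (auto simp: restrict_ans_def)
    have "kwin Q f (restrict_ans T q x) x k d" using q(2) sub Suc.IH by blast
    moreover have "0 < k \<longrightarrow> (\<forall>x'\<in>restrict_ans T q x. kwin Q f (restrict_ans T q x) x' (k - 1) d)"
      using q(3) sub Suc.IH by blast
    ultimately show ?thesis using q(1) by (intro kwinI)
  qed
qed

lemma kwin_mono_d: "kwin Q f S x k d \<Longrightarrow> d \<le> d' \<Longrightarrow> kwin Q f S x k d'"
proof (induction d arbitrary: S x k d')
  case 0
  then have "determined f S" by simp
  then show ?case by (rule kwin_det)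
next
  case (Suc d)
  from Suc.prems(2) obtain e where e: "d' = Suc e" "d \<le> e"
    by (cases d') simp_all
  show ?case
  proof (cases "determined f S")
    case True
    then show ?thesis by (rule kwin_det)
  next
    case False
    with Suc.prems(1) obtain q where q: "q \<in> Q" "kwin Q f (restrict_ans S q x) x k d"
      "0 < k \<longrightarrow> (\<forall>x'\<in>restrict_ans S q x. kwin Q f (restrict_ans S q x) x' (k - 1) d)"
      by (rule kwinE)
    have "kwin Q f (restrict_ans S q x) x k e" using Suc.IH[OF q(2) e(2)] .
    moreover have "0 < k \<longrightarrow> (\<forall>x'\<in>restrict_ans S q x. kwin Q f (restrict_ans S q x) x' (k - 1) e)"
      using q(3) Suc.IH[OF _ e(2)] by blast
    ultimately show ?thesis unfolding e(1) using q(1) by (intro kwinI)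
  qed
qed

lemma kwin_mono_k: "kwin Q f S x k d \<Longrightarrow> k' \<le> k \<Longrightarrow> kwin Q f S x k' d"
proof (induction d arbitrary: S x k k')
  case 0
  then show ?case by simp
next
  case (Suc d)
  show ?case
  proof (cases "determined f S")
    case True
    then show ?thesis by simp
  next
    case False
    with Suc.prems(1) obtain q where q: "q \<in> Q" "kwin Q f (restrict_ans S q x) x k d"
      "0 < k \<longrightarrow> (\<forall>x'\<in>restrict_ans S q x. kwin Q f (restrict_ans S q x) x' (k - 1) d)"
      by auto
    have "0 < k' \<longrightarrow> (\<forall>x'\<in>restrict_ans S q x. kwin Q f (restrict_ans S q x) x' (k' - 1) d)"
      using q(3) Suc.IH Suc.prems(2) by (metis diff_le_mono less_le_trans)
    moreover have "kwin Q f (restrict_ans S q x) x k' d" using q(2) Suc.IH Suc.prems(2) by blast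
    ultimately show ?thesis using q(1) by (intro kwinI)
  qed
qed

lemma comp:
  assumes H2: "\<forall>y\<in>X. kwin Q f X y j2 d2"
  shows "S \<subseteq> X \<Longrightarrow> x \<in> S \<Longrightarrow> kwin Q f S x j d \<Longrightarrow> kwin Q f S x (j + 1 + j2) (d + d2)"
proof (induction d arbitrary: S x j)
  case 0
  then have "determined f S" by simp
  then show ?case by (rule kwin_det)
next
  case (Suc d)
  show ?case
  proof (cases "determined f S")
    case True
    then show ?thesis by (rule kwin_det)
  next
    case False
    with Suc.prems(3) obtain q where q: "q \<in> Q" "kwin Q f (restrict_ans S q x) x j d"
      "0 < j \<longrightarrow> (\<forall>x'\<in>restrict_ans S q x. kwin Q f (restrict_ans S q x) x' (j - 1) d)"
      by (rule kwinE)
    define R where "R = restrict_ans S q x"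
    have RX: "R \<subseteq> X" using Suc.prems(1) by (auto simp: R_def restrict_ans_def)
    have xR: "x \<in> R" using Suc.prems(2) by (auto simp: R_def restrict_ans_def)
    have A: "kwin Q f R x (j + 1 + j2) (d + d2)"
      using Suc.IH[OF RX xR] q(2) unfolding R_def by blast
    have B: "kwin Q f R x' (j + 1 + j2 - 1) (d + d2)" if "x' \<in> R" for x'
    proof (cases "j = 0")
      case True
      have "x' \<in> X" using that RX by auto
      with H2 have "kwin Q f X x' j2 d2" by blast
      then have "kwin Q f R x' j2 d2" using RX by (rule kwin_mono_S)
      then have "kwin Q f R x' j2 (d + d2)" by (rule kwin_mono_d) simp
      moreover have "j + 1 + j2 - 1 = j2" using True by simp
      ultimately show ?thesis by simp
    next
      case False
      then have "kwin Q f R x' (j - 1) d" using q(3) that by (simp add: R_def)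
      moreover have "j - 1 + 1 + j2 = j + 1 + j2 - 1" using False by simp
      ultimately show ?thesis using Suc.IH[OF RX that] by metis
    qed
    have B': "0 < j + 1 + j2 \<longrightarrow> (\<forall>x'\<in>restrict_ans S q x. kwin Q f (restrict_ans S q x) x' (j + 1 + j2 - 1) (d + d2))"
      using B by (simp add: R_def)
    have "kwin Q f S x (j + 1 + j2) (Suc (d + d2))"
      using q(1) A B' by (intro kwinI) (simp_all add: R_def)
    then show ?thesis by (simp only: add_Suc)
  qed
qed

lemma INF_enat_nonempty:
  assumes "A \<noteq> {}"
  shows "(INF d\<in>A. enat d) = enat (LEAST d. d \<in> A)"
proof (rule antisym)
  from assms obtain a where "a \<in> A" by blast
  then have "(LEAST d. d \<in> A) \<in> A" by (rule LeastI)
  then show "(INF d\<in>A. enat d) \<le> enat (LEAST d. d \<in> A)" by (rule INF_lower)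
next
  show "enat (LEAST d. d \<in> A) \<le> (INF d\<in>A. enat d)"
    by (rule INF_greatest) (simp add: Least_le)
qed

lemma qc_Dk_finite:
  assumes "qc_Dk Q f X j \<noteq> \<infinity>"
  shows "\<exists>d. qc_Dk Q f X j = enat d \<and> (\<forall>x\<in>X. kwin Q f X x j d)"
proof -
  let ?A = "{d. \<forall>x\<in>X. kwin Q f X x j d}"
  have "?A \<noteq> {}"
  proof
    assume "?A = {}"
    then have "qc_Dk Q f X j = \<infinity>" unfolding qc_Dk_def by (simp only: image_empty Inf_empty) (simp add: top_enat_def)
    with assms show False by simp
  qed
  then obtain a where a: "a \<in> ?A" by blast
  have "qc_Dk Q f X j = enat (LEAST d. d \<in> ?A)"
    using INF_enat_nonempty[OF \<open>?A \<noteq> {}\<close>] by (simp add: qc_Dk_def)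
  moreover have "(LEAST d. d \<in> ?A) \<in> ?A" using a by (rule LeastI)
  ultimately show ?thesis by blast
qed

lemma qc_Dk_le: "\<forall>x\<in>X. kwin Q f X x k d \<Longrightarrow> qc_Dk Q f X k \<le> enat d"
  unfolding qc_Dk_def by (rule INF_lower) simp

lemma arith_aux: "js \<noteq> [] \<Longrightarrow> j + 1 + (sum_list (map Suc js) - 1) = sum_list (map Suc (j # js)) - 1"
  by (cases js) simp_all

lemma list_comp:
  "js \<noteq> [] \<Longrightarrow> (\<forall>j\<in>set js. qc_Dk Q f X j \<noteq> \<infinity>) \<Longrightarrow>
   \<exists>D. sum_list (map (qc_Dk Q f X) js) = enat D \<and>
       (\<forall>x\<in>X. kwin Q f X x (sum_list (map Suc js) - 1) D)"
proof (induction js)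
  case Nil
  then show ?case by simp
next
  case (Cons j js)
  obtain d where d: "qc_Dk Q f X j = enat d" "\<forall>x\<in>X. kwin Q f X x j d"
  proof -
    have "qc_Dk Q f X j \<noteq> \<infinity>" using Cons.prems(2) by simp
    from qc_Dk_finite[OF this] show ?thesis using that by blast
  qed
  show ?case
  proof (cases "js = []")
    case True
    have e1: "sum_list (map (qc_Dk Q f X) (j # js)) = enat d" using True d(1) by simp
    have e2: "sum_list (map Suc (j # js)) - 1 = j" using True by simp
    show ?thesis unfolding e1 e2 using d(2) by blast
  next
    case False
    have "\<forall>j\<in>set js. qc_Dk Q f X j \<noteq> \<infinity>" using Cons.prems(2) by simp
    from Cons.IH[OF False this] obtain D where D: "sum_list (map (qc_Dk Q f X) js) = enat D"
      "\<forall>x\<in>X. kwin Q f X x (sum_list (map Suc js) - 1) D" by blast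
    obtain j0 js0 where js0: "js = j0 # js0" using False by (cases js) blast+
    have pos: "sum_list (map Suc js) \<ge> 1" unfolding js0 by simp
    have 1: "\<forall>x\<in>X. kwin Q f X x (j + 1 + (sum_list (map Suc js) - 1)) (d + D)"
    proof
      fix x assume "x \<in> X"
      show "kwin Q f X x (j + 1 + (sum_list (map Suc js) - 1)) (d + D)"
        by (rule comp[OF D(2) order_refl \<open>x \<in> X\<close> d(2)[rule_format, OF \<open>x \<in> X\<close>]])
    qed
    have 2: "j + 1 + (sum_list (map Suc js) - 1) = sum_list (map Suc (j # js)) - 1"
      by (rule arith_aux[OF False])
    have 3: "sum_list (map (qc_Dk Q f X) (j # js)) = enat (d + D)"
      by (simp only: list.map sum_list_simps d(1) D(1) plus_enat_simps)
    have 4: "\<forall>x\<in>X. kwin Q f X x (sum_list (map Suc (j # js)) - 1) (d + D)"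
      using 1 unfolding 2 .
    show ?thesis by (rule exI[of _ "d + D"], rule conjI, rule 3, rule 4)
  qed
qed

theorem proposition1:
  fixes X :: "'x set" and f :: "'x \<Rightarrow> 'y" and Q :: "('x \<Rightarrow> 'a) set"
  assumes "finite X"
  shows "(\<forall>k. qc_Dk Q f X k \<le> qc_D Q f X) \<and>
         (\<forall>k. qc_Dk Q f X k \<le>
            (INF js\<in>{js :: nat list. js \<noteq> [] \<and> k < sum_list (map Suc js)}.
               sum_list (map (qc_Dk Q f X) js)))"
proof (intro conjI allI)
  fix k
  show "qc_Dk Q f X k \<le> qc_D Q f X"
    unfolding qc_Dk_def qc_D_def
    by (rule INF_superset_mono) (auto intro: dt_le_kwin)
next
  fix k
  show "qc_Dk Q f X k \<le>
            (INF js\<in>{js :: nat list. js \<noteq> [] \<and> k < sum_list (map Suc js)}.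
               sum_list (map (qc_Dk Q f X) js))"
  proof (rule INF_greatest)
    fix js assume js: "js \<in> {js :: nat list. js \<noteq> [] \<and> k < sum_list (map Suc js)}"
    show "qc_Dk Q f X k \<le> sum_list (map (qc_Dk Q f X) js)"
    proof (cases "\<forall>j\<in>set js. qc_Dk Q f X j \<noteq> \<infinity>")
      case True
      from js have "js \<noteq> []" by simp
      from list_comp[OF this True] obtain D where D: "sum_list (map (qc_Dk Q f X) js) = enat D"
        "\<forall>x\<in>X. kwin Q f X x (sum_list (map Suc js) - 1) D" by blast
      from js have "k < sum_list (map Suc js)" by simp
      then have "k \<le> sum_list (map Suc js) - 1" by linarith
      then have "\<forall>x\<in>X. kwin Q f X x k D" using D(2) kwin_mono_k[of Q f X _ "sum_list (map Suc js) - 1" D k] by blast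
      from qc_Dk_le[OF this] show ?thesis unfolding D(1) .
    next
      case False
      then obtain j where "j \<in> set js" "qc_Dk Q f X j = \<infinity>" by blast
      have "qc_Dk Q f X j \<in> set (map (qc_Dk Q f X) js)"
        using \<open>j \<in> set js\<close> by (simp only: set_map) (rule imageI)
      then have "qc_Dk Q f X j \<le> sum_list (map (qc_Dk Q f X) js)" by (rule member_le_sum_list) simp_all
      then have "sum_list (map (qc_Dk Q f X) js) = \<infinity>" using \<open>qc_Dk Q f X j = \<infinity>\<close> by simp
      then show ?thesis by simp
    qed
  qed
qed

end
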